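(* Let $m\geq 1$ be an integer. For all integers $n\geq 1$ and all real $x,y\in(0,\pi)$, $$\sum_{k=0}^n \binom{n-k+m}{m}\frac{\sin((2k+1)x)\,\sin((2k+1)y)}{2k+1}>0.$$ The lower bound $0$ is sharp. *)

theory Defs
  imports Complex_Main
begin

definition S :: "nat \<Rightarrow> nat \<Rightarrow> real \<Rightarrow> real \<Rightarrow> real" where
  "S m n x y = (\<Sum>k=0..n. real ((n - k + m) choose m) *
      (sin (real (2*k+1) * x) * sin (real (2*k+1) * y)) / real (2*k+1))"

end

theory Submission
  imports Defs
begin

definition G :: "nat \<Rightarrow> nat \<Rightarrow> real \<Rightarrow> real" where
  "G m n t = (\<Sum>k=0..n. real ((n - k + m) choose m) * sin (real (2*k+1) * t))"

definition F :: "nat \<Rightarrow> nat \<Rightarrow> real \<Rightarrow> real" where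
  "F m n t = (\<Sum>k=0..n. real ((n - k + m) choose m) * cos (real (2*k+1) * t) / real (2*k+1))"

lemma sin_sq_diff: "sin (a+b) * sin (a-b) = sin a ^ 2 - sin (b::real) ^ 2"
proof -
  have "sin (a+b) * sin (a-b) = (sin a * cos b)^2 - (cos a * sin b)^2"
    by (simp only: sin_add sin_diff power2_eq_square) (simp add: algebra_simps)
  also have "\<dots> = sin a ^ 2 * (1 - sin b ^2) - (1 - sin a ^ 2) * sin b ^ 2"
    by (simp add: power_mult_distrib cos_squared_eq)
  finally show ?thesis by (simp add: algebra_simps)
qed

lemma G0: "sin t * G 0 n t = sin (real (n+1) * t) ^ 2"
proof (induction n)
  case 0 then show ?case by (simp add: G_def power2_eq_square)
next
  case (Suc n)
  have "G 0 (Suc n) t = G 0 n t + sin (real (2*n+3) * t)"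
    by (simp add: G_def algebra_simps)
  hence "sin t * G 0 (Suc n) t = sin (real (n+1) * t) ^ 2 + sin t * sin (real (2*n+3) * t)"
    using Suc by (simp add: algebra_simps)
  also have "sin t * sin (real (2*n+3) * t) = sin (real (n+2) * t) ^ 2 - sin (real (n+1) * t) ^ 2"
    using sin_sq_diff[of "real (n+2) * t" "real (n+1) * t"]
    by (simp add: algebra_simps)
  finally show ?case by (simp add: add.commute)
qed

lemma G0_nonneg: "0 < t \<Longrightarrow> t < pi \<Longrightarrow> G 0 n t \<ge> 0"
proof -
  assume "0 < t" "t < pi"
  hence s: "sin t > 0" by (simp add: sin_gt_zero)
  have "sin t * G 0 n t \<ge> 0" using G0 by simp
  thus ?thesis using s by (simp add: zero_le_mult_iff)
qed

lemma G_rec: "G (Suc m) (Suc n) t = G (Suc m) n t + G m (Suc n) t"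
proof -
  have "G (Suc m) (Suc n) t = (\<Sum>k=0..n. real ((Suc n - k + Suc m) choose (Suc m)) * sin (real (2*k+1) * t))
      + sin (real (2*Suc n+1) * t)"
    by (simp add: G_def)
  also have "(\<Sum>k=0..n. real ((Suc n - k + Suc m) choose (Suc m)) * sin (real (2*k+1) * t))
     = (\<Sum>k=0..n. real ((n - k + Suc m) choose (Suc m)) * sin (real (2*k+1) * t))
     + (\<Sum>k=0..n. real ((Suc n - k + m) choose m) * sin (real (2*k+1) * t))"
  proof -
    have "\<And>k. k \<in> {0..n} \<Longrightarrow> real ((Suc n - k + Suc m) choose (Suc m)) * sin (real (2*k+1) * t)
       = real ((n - k + Suc m) choose (Suc m)) * sin (real (2*k+1) * t)
       + real ((Suc n - k + m) choose m) * sin (real (2*k+1) * t)"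
    proof -
      fix k assume "k \<in> {0..n}"
      hence k: "k \<le> n" by simp
      have e1: "Suc n - k + Suc m = Suc (Suc n - k + m)" by simp
      have e2: "Suc n - k + m = n - k + Suc m" using k by simp
      have "(Suc n - k + Suc m) choose (Suc m) = ((Suc n - k + m) choose m) + ((n - k + Suc m) choose (Suc m))"
        unfolding e1 binomial_Suc_Suc using e2 by simp
      thus "real ((Suc n - k + Suc m) choose (Suc m)) * sin (real (2*k+1) * t)
       = real ((n - k + Suc m) choose (Suc m)) * sin (real (2*k+1) * t)
       + real ((Suc n - k + m) choose m) * sin (real (2*k+1) * t)"
        by (simp add: algebra_simps)
    qed
    thus ?thesis by (simp add: sum.distrib[symmetric])
  qed
  finally show ?thesis by (simp add: G_def)
qed

lemma G_nonneg: "0 < t \<Longrightarrow> t < pi \<Longrightarrow> G m n t \<ge> 0"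
proof (induction m arbitrary: n)
  case 0 then show ?case by (rule G0_nonneg)
next
  case (Suc m)
  note IHm = Suc.IH and pr = Suc.prems
  show ?case
  proof (induction n)
    case 0 then show ?case using pr by (simp add: G_def sin_ge_zero)
  next
    case (Suc n) then show ?case using G_rec[of m n t] IHm[of "Suc n"] pr
      by simp
  qed
qed

lemma G_pos: "0 < t \<Longrightarrow> t < pi \<Longrightarrow> G (Suc m) n t > 0"
proof (induction n)
  case 0 then show ?case by (simp add: G_def sin_gt_zero)
next
  case (Suc n) then show ?case using G_rec[of m n t] G_nonneg[where m=m and n="Suc n" and t=t]
    by simp
qed

lemma deriv_aux: "(r::real) \<noteq> 0 \<Longrightarrow> ((0 * a + - s * (0 * t + 1 * r) * c) * r - c * a * 0) / (r * r) = c * (- s * r) / r"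
  by (simp add: field_simps)

lemma F_deriv: "(F m n has_real_derivative - G m n t) (at t)"
proof -
  have "((\<lambda>t. F m n t) has_real_derivative
     (\<Sum>k=0..n. real ((n - k + m) choose m) * (- sin (real (2*k+1) * t) * real (2*k+1)) / real (2*k+1))) (at t)"
    unfolding F_def
  proof (rule DERIV_sum)
    fix k assume "k \<in> {0..n}"
    show "((\<lambda>t. real ((n - k + m) choose m) * cos (real (2*k+1) * t) / real (2*k+1)) has_real_derivative
       real ((n - k + m) choose m) * (- sin (real (2*k+1) * t) * real (2*k+1)) / real (2*k+1)) (at t)"
      apply (rule derivative_eq_intros refl)+
       apply simp
      apply (rule deriv_aux)
      apply simp
      done
  qed
  moreover have "(\<Sum>k=0..n. real ((n - k + m) choose m) * (- sin (real (2*k+1) * t) * real (2*k+1)) / real (2*k+1))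
     = - G m n t"
    unfolding G_def sum_negf[symmetric] by (rule sum.cong) (simp_all add: field_simps)
  ultimately show ?thesis by simp
qed

lemma F_cont: "continuous_on A (F m n)"
  unfolding F_def by (intro continuous_intros) auto

lemma F_decr: "0 \<le> a \<Longrightarrow> a < b \<Longrightarrow> b \<le> pi \<Longrightarrow> F (Suc m) n a > F (Suc m) n b"
  apply (rule DERIV_neg_imp_decreasing_open[of a b "F (Suc m) n"])
    apply simp
   apply (rule exI[of _ "- G (Suc m) n _"])
  using F_deriv G_pos apply auto[1]
  by (rule F_cont)

lemma F_even: "F m n (- t) = F m n t"
  by (simp add: F_def)

lemma F_refl: "F m n (2*pi - t) = F m n t"
proof -
  have "\<And>k. cos (real (2*k+1) * (2*pi - t)) = cos (real (2*k+1) * t)"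
  proof -
    fix k :: nat
    have "real (2*k+1) * (2*pi - t) = 2 * real (2*k+1) * pi - real (2*k+1) * t"
      by (simp add: algebra_simps)
    thus "cos (real (2*k+1) * (2*pi - t)) = cos (real (2*k+1) * t)"
      by (simp only: cos_diff cos_2npi sin_2npi)
  qed
  thus ?thesis unfolding F_def by simp
qed

lemma S_F: "S m n x y = (F m n (x - y) - F m n (x + y)) / 2"
proof -
  have "\<And>k. sin (real (2*k+1) * x) * sin (real (2*k+1) * y)
     = (cos (real (2*k+1) * (x - y)) - cos (real (2*k+1) * (x + y))) / 2"
    by (simp add: distrib_left right_diff_distrib cos_diff cos_add)
  hence "S m n x y = (\<Sum>k=0..n. (real ((n - k + m) choose m) * cos (real (2*k+1) * (x-y)) / real (2*k+1)
      - real ((n - k + m) choose m) * cos (real (2*k+1) * (x+y)) / real (2*k+1)) / 2)"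
    unfolding S_def by (intro sum.cong) (simp_all add: diff_divide_distrib right_diff_distrib)
  also have "\<dots> = (F m n (x - y) - F m n (x + y)) / 2"
    unfolding F_def by (simp add: sum_divide_distrib[symmetric] sum_subtractf)
  finally show ?thesis .
qed

theorem theorem4:
  fixes m :: nat
  assumes "m \<ge> 1"
  shows "(\<forall>n::nat. \<forall>x y::real. n \<ge> 1 \<longrightarrow> 0 < x \<longrightarrow> x < pi \<longrightarrow> 0 < y \<longrightarrow> y < pi
            \<longrightarrow> S m n x y > 0)
       \<and> (\<forall>\<epsilon>>0. \<exists>n::nat. \<exists>x y::real. n \<ge> 1 \<and> 0 < x \<and> x < pi \<and> 0 < y \<and> y < pi
            \<and> S m n x y < \<epsilon>)"
proof
  obtain m' where m': "m = Suc m'" using assms by (cases m) auto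
  show "\<forall>n::nat. \<forall>x y::real. n \<ge> 1 \<longrightarrow> 0 < x \<longrightarrow> x < pi \<longrightarrow> 0 < y \<longrightarrow> y < pi
            \<longrightarrow> S m n x y > 0"
  proof (intro allI impI)
    fix n :: nat and x y :: real
    assume "0 < x" "x < pi" "0 < y" "y < pi"
    define v where "v = \<bar>x - y\<bar>"
    define u where "u = (if x + y \<le> pi then x + y else 2*pi - (x+y))"
    have Fv: "F m n (x - y) = F m n v"
      unfolding v_def by (cases "x - y \<ge> 0") (auto simp: F_even[of m n "y - x", symmetric])
    have Fu: "F m n (x + y) = F m n u"
      unfolding u_def using F_refl[of m n "x+y"] by auto
    have "0 \<le> v" "v < u" "u \<le> pi"
      using \<open>0 < x\<close> \<open>x < pi\<close> \<open>0 < y\<close> \<open>y < pi\<close> unfolding u_def v_def by auto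
    hence "F m n v > F m n u" using F_decr m' by blast
    thus "S m n x y > 0" unfolding S_F Fv Fu by simp
  qed
next
  show "\<forall>\<epsilon>>0. \<exists>n::nat. \<exists>x y::real. n \<ge> 1 \<and> 0 < x \<and> x < pi \<and> 0 < y \<and> y < pi
            \<and> S m n x y < \<epsilon>"
  proof (intro allI impI)
    fix \<epsilon> :: real assume e: "\<epsilon> > 0"
    define c where "c = real ((Suc m) choose m)"
    have c0: "c \<ge> 0" unfolding c_def by simp
    define x where "x = min 1 (\<epsilon> / (2 * (c + 1)))"
    have x0: "0 < x" unfolding x_def using e c0 by simp
    have x1: "x \<le> 1" unfolding x_def by simp
    have xe: "x * (c + 1) \<le> \<epsilon> / 2"
    proof -
      have "x \<le> \<epsilon> / (2 * (c + 1))" unfolding x_def by simp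
      hence "x * (c+1) \<le> \<epsilon> / (2 * (c + 1)) * (c+1)" using c0 by (intro mult_right_mono) auto
      moreover have "\<epsilon> / (2 * (c + 1)) * (c+1) = \<epsilon> / 2" using c0 by (simp add: field_simps)
      ultimately show ?thesis by linarith
    qed
    have "S m 1 x (pi/2) = c * sin x - sin (3 * x) / 3"
    proof -
      have "sin (3 * pi / 2) = -1"
        using sin_add[of pi "pi/2"] by (simp add: field_simps)
      hence "sin (3 * (pi / 2)) = -1" by simp
      thus ?thesis unfolding S_def c_def by (simp add: numeral_eq_Suc)
    qed
    also have "\<dots> \<le> c * x + x"
    proof -
      have "sin x \<le> x" using x0 by (simp add: sin_x_le_x)
      hence "c * sin x \<le> c * x" using c0 by (simp add: mult_left_mono)
      moreover have "- sin (3*x) \<le> 3 * x" using abs_sin_x_le_abs_x[of "3*x"] x0 by auto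
      ultimately show ?thesis by linarith
    qed
    also have "\<dots> < \<epsilon>" using xe e by (simp add: algebra_simps)
    finally have "S m 1 x (pi/2) < \<epsilon>" .
    moreover have "x < pi" using x1 pi_ge_two by simp
    ultimately show "\<exists>n::nat. \<exists>x y::real. n \<ge> 1 \<and> 0 < x \<and> x < pi \<and> 0 < y \<and> y < pi
            \<and> S m n x y < \<epsilon>"
      using x0 by (intro exI[of _ 1] exI[of _ x] exI[of _ "pi/2"]) auto
  qed
qed

end
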